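(* Let $(\mathfrak g,\{e_1,\dots,e_n\})$ be a nice nilpotent Lie algebra with root matrix $M_\Delta\in\mathbb R^{m\times n}$ and structure constants $c_{ij}^k$, and let $b\in\mathbb R^m$ be a solution of $M_\Delta M_\Delta^{T} b=[1]$. Let $g=\sum_{i=1}^n g_i\, e^i\otimes e^i$ ($g_i\neq 0$) be a diagonal pseudo-Riemannian metric on $\mathfrak g$, let $\lambda\in\mathbb R$, and define $X\in\mathbb R^m$ by letting, for the row $h$ of $M_\Delta$ corresponding to $(\{i,j\},k)$ with $i<j$, $$X_h=\frac{g_k}{g_ig_j}\,(c_{ij}^k)^2 .$$ Then the following are equivalent: (1) $g$ is a nilsoliton with $\operatorname{Ric}=\lambda\,\mathrm{id}+D$ for some derivation $D$ of $\mathfrak g$; (2) $\operatorname{Ric}=\lambda(\mathrm{id}-N)$, where $N$ is the diagonal Nikolayevsky derivation; (3) $X\in -2\lambda b+\ker M_\Delta^{T}$.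
   Context: A nice Lie algebra is a Lie algebra $\mathfrak g$ with a basis $\{e_1,\dots,e_n\}$ (dual basis $\{e^1,\dots,e^n\}$) such that each bracket $[e_i,e_j]$ is a multiple of some $e_k$ and each $e_i\lrcorner\, de^j$ is a multiple of some $e^k$, where $d$ is the Chevalley–Eilenberg differential. Write $[e_i,e_j]=c_{ij}^k e_k$ for $i<j$. The root matrix $M_\Delta$ has one row for each triple $(\{i,j\},k)$ such that $[e_i,e_j]$ is a nonzero multiple of $e_k$; that row has $+1$ in position $k$, $-1$ in positions $i$ and $j$, and $0$ elsewhere; $m$ is the number of rows. $[1]$ denotes the vector with all entries $1$, and for $v\in\mathbb R^n$, $v^D$ denotes the diagonal matrix (in the basis $\{e_i\}$) with diagonal entries those of $v$. The diagonal Nikolayevsky derivation is $N=v^D$ with $v=M_\Delta^{T}b+[1]$, where $b$ is any solution of $M_\Delta M_\Delta^T b=[1]$. $\operatorname{Ric}$ denotes the Ricci operator of the left-invariant pseudo-Riemannian metric determined by $g$. A metric is a nilsoliton if $\operatorname{Ric}=\lambda\,\mathrm{id}+D$ with $\lambda\in\mathbb R$ and $D$ a derivation. *)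

theory Defs
  imports Main "HOL-Library.FuncSet" Complex_Main
begin

text \<open>A real Lie algebra of dimension n with basis e_0,...,e_(n-1)
 (indices 0..n-1 instead of 1..n) is given by structure constants
 c i j k = coefficient of e_k in [e_i,e_j]. Vectors are functions nat => real;
 only the components with index < n are meaningful.\<close>

type_synonym vec = "nat \<Rightarrow> real"
type_synonym sconst = "nat \<Rightarrow> nat \<Rightarrow> nat \<Rightarrow> real"

definition basis_vec :: "nat \<Rightarrow> vec" where
  "basis_vec a = (\<lambda>l. if l = a then 1 else 0)"

definition br :: "nat \<Rightarrow> sconst \<Rightarrow> vec \<Rightarrow> vec \<Rightarrow> vec" where
  "br n c x y = (\<lambda>k. \<Sum>i<n. \<Sum>j<n. x i * y j * c i j k)"

definition is_lie_algebra :: "nat \<Rightarrow> sconst \<Rightarrow> bool" where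
  "is_lie_algebra n c \<longleftrightarrow>
     (\<forall>i j k. c i j k \<noteq> 0 \<longrightarrow> i < n \<and> j < n \<and> k < n) \<and>
     (\<forall>i j k. c i j k = - c j i k) \<and>
     (\<forall>i<n. \<forall>j<n. \<forall>l<n. \<forall>k<n.
        (\<Sum>p<n. c j l p * c i p k + c l i p * c j p k + c i j p * c l p k) = 0)"

fun iter_br :: "nat \<Rightarrow> sconst \<Rightarrow> (nat \<Rightarrow> vec) \<Rightarrow> nat \<Rightarrow> vec" where
  "iter_br n c v 0 = v 0"
| "iter_br n c v (Suc p) = br n c (v (Suc p)) (iter_br n c v p)"

definition is_nilpotent :: "nat \<Rightarrow> sconst \<Rightarrow> bool" where
  "is_nilpotent n c \<longleftrightarrow> (\<exists>p. \<forall>v. \<forall>k<n. iter_br n c v p k = 0)"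

text \<open>Nice basis: each [e_i,e_j] is a multiple of some e_k, and each
 e_i \<lrcorner> de^k (= the 1-form x \<mapsto> -e^k([e_i,x]) = - sum_j c i j k x_j) is a
 multiple of some e^j.\<close>
definition is_nice :: "nat \<Rightarrow> sconst \<Rightarrow> bool" where
  "is_nice n c \<longleftrightarrow>
     (\<forall>i<n. \<forall>j<n. \<exists>k. \<forall>k'. c i j k' \<noteq> 0 \<longrightarrow> k' = k) \<and>
     (\<forall>i<n. \<forall>k<n. \<exists>j. \<forall>j'. c i j' k \<noteq> 0 \<longrightarrow> j' = j)"

text \<open>Rows of the root matrix, indexed by triples (i,j,k) with i<j
 (standing for ({i,j},k)) such that [e_i,e_j] is a nonzero multiple of e_k.\<close>
definition roots :: "nat \<Rightarrow> sconst \<Rightarrow> (nat \<times> nat \<times> nat) set" where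
  "roots n c = {(i,j,k). i < j \<and> j < n \<and> k < n \<and> c i j k \<noteq> 0}"

definition root_matrix :: "nat \<times> nat \<times> nat \<Rightarrow> nat \<Rightarrow> real" where
  "root_matrix h l = (case h of (i,j,k) \<Rightarrow>
     (if l = k then 1 else 0) - (if l = i then 1 else 0) - (if l = j then 1 else 0))"

definition MMt_eq_one :: "nat \<Rightarrow> sconst \<Rightarrow> (nat \<times> nat \<times> nat \<Rightarrow> real) \<Rightarrow> bool" where
  "MMt_eq_one n c b \<longleftrightarrow> (\<forall>h\<in>roots n c.
     (\<Sum>h'\<in>roots n c. (\<Sum>l<n. root_matrix h l * root_matrix h' l) * b h') = 1)"

definition in_ker_Mt :: "nat \<Rightarrow> sconst \<Rightarrow> (nat \<times> nat \<times> nat \<Rightarrow> real) \<Rightarrow> bool" where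
  "in_ker_Mt n c z \<longleftrightarrow> (\<forall>l<n. (\<Sum>h\<in>roots n c. root_matrix h l * z h) = 0)"

definition nik_diag :: "nat \<Rightarrow> sconst \<Rightarrow> (nat \<times> nat \<times> nat \<Rightarrow> real) \<Rightarrow> nat \<Rightarrow> real" where
  "nik_diag n c b l = (\<Sum>h\<in>roots n c. root_matrix h l * b h) + 1"

definition matvec :: "nat \<Rightarrow> (nat \<Rightarrow> nat \<Rightarrow> real) \<Rightarrow> vec \<Rightarrow> vec" where
  "matvec n D x = (\<lambda>k. \<Sum>l<n. D k l * x l)"

definition is_derivation :: "nat \<Rightarrow> sconst \<Rightarrow> (nat \<Rightarrow> nat \<Rightarrow> real) \<Rightarrow> bool" where
  "is_derivation n c D \<longleftrightarrow> (\<forall>x y. \<forall>k<n.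
     matvec n D (br n c x y) k = br n c (matvec n D x) y k + br n c x (matvec n D y) k)"

text \<open>Diagonal metric g = sum g_i e^i \<otimes> e^i, Levi-Civita connection via the
 Koszul formula, curvature R(x,y) = [\<nabla>_x,\<nabla>_y] - \<nabla>_[x,y], Ricci tensor
 ric(y,z) = tr(x \<mapsto> R(x,y)z), Ricci operator g(Ric y, z) = ric(y,z).\<close>
definition gform :: "nat \<Rightarrow> vec \<Rightarrow> vec \<Rightarrow> vec \<Rightarrow> real" where
  "gform n g x y = (\<Sum>i<n. g i * x i * y i)"

definition levi_civita :: "nat \<Rightarrow> sconst \<Rightarrow> vec \<Rightarrow> vec \<Rightarrow> vec \<Rightarrow> vec" where
  "levi_civita n c g x y = (\<lambda>k. if k < n then
     (gform n g (br n c x y) (basis_vec k) - gform n g (br n c y (basis_vec k)) x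
      + gform n g (br n c (basis_vec k) x) y) / (2 * g k) else 0)"

definition curv :: "nat \<Rightarrow> sconst \<Rightarrow> vec \<Rightarrow> vec \<Rightarrow> vec \<Rightarrow> vec \<Rightarrow> vec" where
  "curv n c g x y z = (\<lambda>k.
     levi_civita n c g x (levi_civita n c g y z) k
     - levi_civita n c g y (levi_civita n c g x z) k
     - levi_civita n c g (br n c x y) z k)"

definition ric :: "nat \<Rightarrow> sconst \<Rightarrow> vec \<Rightarrow> vec \<Rightarrow> vec \<Rightarrow> real" where
  "ric n c g y z = (\<Sum>a<n. curv n c g (basis_vec a) y z a)"

definition Ric :: "nat \<Rightarrow> sconst \<Rightarrow> vec \<Rightarrow> vec \<Rightarrow> vec" where
  "Ric n c g y = (\<lambda>k. if k < n then ric n c g y (basis_vec k) / g k else 0)"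

end

theory Submission
  imports Defs
begin


lemma sum_basis_l: "a < n \<Longrightarrow> (\<Sum>i<n. basis_vec a i * f i) = (f a :: real)"
proof -
  assume a: "a < n"
  have "(\<Sum>i<n. basis_vec a i * f i) = (\<Sum>i<n. if i = a then f i else 0)"
    by (rule sum.cong) (auto simp: basis_vec_def)
  then show ?thesis using a by simp
qed

lemma sum_basis_r: "a < n \<Longrightarrow> (\<Sum>i<n. f i * basis_vec a i) = (f a :: real)"
  using sum_basis_l[of a n f] by (simp add: mult.commute)

definition Gam :: "sconst \<Rightarrow> vec \<Rightarrow> nat \<Rightarrow> nat \<Rightarrow> nat \<Rightarrow> real" where
  "Gam c g i j k = (g k * c i j k - g i * c j k i + g j * c k i j) / (2 * g k)"

lemma gform_basis: "k < n \<Longrightarrow> gform n g u (basis_vec k) = g k * u k"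
  unfolding gform_def using sum_basis_r[of k n "\<lambda>i. g i * u i"] by (simp add: mult.assoc)

lemma br_basis_r: "k < n \<Longrightarrow> br n c y (basis_vec k) = (\<lambda>i. \<Sum>j<n. y j * c j k i)"
proof -
  assume k: "k < n"
  have "\<And>i j. (\<Sum>l<n. y j * basis_vec k l * c j l i) = y j * c j k i"
  proof -
    fix i j
    have "(\<Sum>l<n. y j * basis_vec k l * c j l i) = y j * (\<Sum>l<n. basis_vec k l * c j l i)"
      by (simp add: sum_distrib_left mult.assoc)
    then show "(\<Sum>l<n. y j * basis_vec k l * c j l i) = y j * c j k i"
      using sum_basis_l[OF k, of "\<lambda>l. c j l i"] by simp
  qed
  then show ?thesis unfolding br_def by simp
qed

lemma br_basis_l: "k < n \<Longrightarrow> br n c (basis_vec k) y = (\<lambda>i. \<Sum>j<n. y j * c k j i)"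
proof -
  assume k: "k < n"
  have "\<And>i. (\<Sum>l<n. \<Sum>j<n. basis_vec k l * y j * c l j i) = (\<Sum>j<n. y j * c k j i)"
  proof -
    fix i
    have "(\<Sum>l<n. \<Sum>j<n. basis_vec k l * y j * c l j i) = (\<Sum>l<n. basis_vec k l * (\<Sum>j<n. y j * c l j i))"
      by (simp add: sum_distrib_left mult.assoc)
    then show "?thesis i"
      using sum_basis_l[OF k, of "\<lambda>l. \<Sum>j<n. y j * c l j i"] by simp
  qed
  then show ?thesis unfolding br_def by simp
qed

lemma LC_eq: "k < n \<Longrightarrow> levi_civita n c g x y k = (\<Sum>i<n. \<Sum>j<n. x i * y j * Gam c g i j k)"
proof -
  assume k: "k < n"
  have e0: "levi_civita n c g x y k =
    (g k * (\<Sum>i<n. \<Sum>j<n. x i * y j * c i j k) - (\<Sum>i<n. g i * (\<Sum>j<n. y j * c j k i) * x i)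
     + (\<Sum>j<n. g j * (\<Sum>i<n. x i * c k i j) * y j)) / (2 * g k)"
    unfolding levi_civita_def using k
    by (simp add: gform_basis br_basis_r br_basis_l, simp add: gform_def br_def)
  have e1: "g k * (\<Sum>i<n. \<Sum>j<n. x i * y j * c i j k) = (\<Sum>i<n. \<Sum>j<n. x i * y j * (g k * c i j k))"
    by (simp add: sum_distrib_left mult_ac)
  have e2: "(\<Sum>i<n. g i * (\<Sum>j<n. y j * c j k i) * x i) = (\<Sum>i<n. \<Sum>j<n. x i * y j * (g i * c j k i))"
    by (simp add: sum_distrib_left sum_distrib_right mult_ac)
  have e3: "(\<Sum>j<n. g j * (\<Sum>i<n. x i * c k i j) * y j) = (\<Sum>i<n. \<Sum>j<n. x i * y j * (g j * c k i j))"
    by (subst sum.swap, simp add: sum_distrib_left sum_distrib_right mult_ac)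
  have e4: "(g k * (\<Sum>i<n. \<Sum>j<n. x i * y j * c i j k) - (\<Sum>i<n. g i * (\<Sum>j<n. y j * c j k i) * x i)
     + (\<Sum>j<n. g j * (\<Sum>i<n. x i * c k i j) * y j)) = (\<Sum>i<n. \<Sum>j<n. x i * y j * (g k * c i j k - g i * c j k i + g j * c k i j))"
    unfolding e1 e2 e3 by (simp add: sum_subtractf[symmetric] sum.distrib[symmetric] algebra_simps)
  have e5: "(\<Sum>i<n. \<Sum>j<n. x i * y j * (g k * c i j k - g i * c j k i + g j * c k i j)) / (2 * g k) = (\<Sum>i<n. \<Sum>j<n. x i * y j * Gam c g i j k)"
    by (simp add: Gam_def sum_divide_distrib)
  show ?thesis unfolding e0 e4 e5 ..
qed

lemma LC_bx: "a < n \<Longrightarrow> k < n \<Longrightarrow> levi_civita n c g (basis_vec a) y k = (\<Sum>j<n. y j * Gam c g a j k)"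
proof -
  assume a: "a < n" and k: "k < n"
  have "levi_civita n c g (basis_vec a) y k = (\<Sum>i<n. basis_vec a i * (\<Sum>j<n. y j * Gam c g i j k))"
    using k by (simp add: LC_eq sum_distrib_left mult.assoc)
  then show ?thesis using sum_basis_l[OF a] by simp
qed

lemma LC_by: "b < n \<Longrightarrow> k < n \<Longrightarrow> levi_civita n c g y (basis_vec b) k = (\<Sum>l<n. y l * Gam c g l b k)"
proof -
  assume a: "b < n" and k: "k < n"
  have "levi_civita n c g y (basis_vec b) k = (\<Sum>i<n. y i * (\<Sum>j<n. basis_vec b j * Gam c g i j k))"
    using k by (simp add: LC_eq sum_distrib_left mult.assoc)
  then show ?thesis using sum_basis_l[OF a] by simp
qed

lemma Gam_aba:
  assumes d0: "\<And>p a. c p a a = 0" and asym: "\<And>i j k. c i j k = - c j i k"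
  shows "Gam c g a p a = 0"
proof -
  have "c a a p = 0" using asym[of a a p] by linarith
  moreover have "c a p a = 0" using asym[of a p a] d0[of p a] by linarith
  ultimately show ?thesis unfolding Gam_def using d0[of p a] by simp
qed

definition rr :: "nat \<Rightarrow> sconst \<Rightarrow> vec \<Rightarrow> nat \<Rightarrow> nat \<Rightarrow> real" where
  "rr n c g l k = - (\<Sum>a<n. \<Sum>p<n. Gam c g a k p * Gam c g l p a + c a l p * Gam c g p k a)"

lemma ric_eq:
  assumes d0: "\<And>p a. c p a a = 0" and asym: "\<And>i j k. c i j k = - c j i k" and k: "k < n"
  shows "ric n c g y (basis_vec k) = (\<Sum>l<n. y l * rr n c g l k)"
proof -
  have cv: "curv n c g (basis_vec a) y (basis_vec k) a =
     - (\<Sum>l<n. y l * (\<Sum>p<n. Gam c g a k p * Gam c g l p a + c a l p * Gam c g p k a))" if a: "a < n" for a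
  proof -
    have t1: "levi_civita n c g (basis_vec a) (levi_civita n c g y (basis_vec k)) a = 0"
    proof -
      have z: "Gam c g a j a = 0" for j by (rule Gam_aba[OF d0 asym])
      show ?thesis using a by (simp add: LC_bx z)
    qed
    have t2: "levi_civita n c g y (levi_civita n c g (basis_vec a) (basis_vec k)) a
       = (\<Sum>l<n. \<Sum>p<n. y l * (Gam c g a k p * Gam c g l p a))"
    proof -
      have w: "levi_civita n c g (basis_vec a) (basis_vec k) p = Gam c g a k p" if p: "p < n" for p
        using sum_basis_l[OF k, of "\<lambda>j. Gam c g a j p"] by (simp add: LC_bx[OF a p])
      show ?thesis unfolding LC_eq[OF a]
        by (intro sum.cong refl) (simp add: w)
    qed
    have t3: "levi_civita n c g (br n c (basis_vec a) y) (basis_vec k) a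
       = (\<Sum>l<n. \<Sum>p<n. y l * (c a l p * Gam c g p k a))"
    proof -
      have "levi_civita n c g (br n c (basis_vec a) y) (basis_vec k) a
         = (\<Sum>p<n. (\<Sum>l<n. y l * c a l p) * Gam c g p k a)"
        unfolding LC_by[OF k a] br_basis_l[OF a] by simp
      also have "\<dots> = (\<Sum>p<n. \<Sum>l<n. y l * (c a l p * Gam c g p k a))"
        by (simp add: sum_distrib_right mult.assoc)
      finally show ?thesis by (subst sum.swap)
    qed
    show ?thesis unfolding curv_def t1 t2 t3
      by (simp add: sum_distrib_left distrib_left sum.distrib)
  qed
  have "ric n c g y (basis_vec k) = (\<Sum>a<n. - (\<Sum>l<n. y l * (\<Sum>p<n. Gam c g a k p * Gam c g l p a + c a l p * Gam c g p k a)))"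
    unfolding ric_def by (rule sum.cong) (auto simp: cv)
  also have "\<dots> = (\<Sum>l<n. y l * rr n c g l k)"
  proof -
    define S where "S a l = (\<Sum>p<n. Gam c g a k p * Gam c g l p a + c a l p * Gam c g p k a)" for a l
    have "(\<Sum>a<n. - (\<Sum>l<n. y l * S a l)) = - (\<Sum>a<n. \<Sum>l<n. y l * S a l)"
      by (simp only: sum_negf)
    also have "\<dots> = - (\<Sum>l<n. \<Sum>a<n. y l * S a l)"
      by (rule arg_cong[where f=uminus], rule sum.swap)
    also have "\<dots> = (\<Sum>l<n. y l * - (\<Sum>a<n. S a l))"
      by (simp only: sum_distrib_left sum_negf mult_minus_right)
    finally show ?thesis unfolding rr_def S_def .
  qed
  finally show ?thesis .
qed



definition PP :: "sconst \<Rightarrow> vec \<Rightarrow> nat \<Rightarrow> nat \<Rightarrow> nat \<Rightarrow> nat \<Rightarrow> real" where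
  "PP c g k l a p = Gam c g a k p * Gam c g l p a + c a l p * Gam c g p k a"

definition QQ :: "sconst \<Rightarrow> vec \<Rightarrow> nat \<Rightarrow> nat \<Rightarrow> nat \<Rightarrow> real" where
  "QQ c g k a p = (g p / g a) * (c a k p)^2 / 2 - (g k)^2 / (g a * g p) * (c a p k)^2 / 4"

lemma S_alg:
  fixes A1 A2 A3 A4 A5 A6 ga gp gk gl :: real
  assumes ga: "ga \<noteq> 0" and gp: "gp \<noteq> 0"
  shows "(gp * A1 - ga * A2 + gk * A3) / (2 * gp) * ((ga * A4 - gl * A5 + gp * A6) / (2 * ga))
        + A6 * ((ga * - A2 - gp * - A1 + gk * - A3) / (2 * ga))
        + ((ga * - A2 - gp * - A1 + gk * - A3) / (2 * ga) * ((gp * - A6 - gl * - A5 + ga * - A4) / (2 * gp))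
        + - A4 * ((gp * A1 - ga * A2 + gk * A3) / (2 * gp)))
   = (- (gk * gl * A3 * A5) + (gp * A1 - ga * A2) * (gp * A6 - ga * A4)) / (2 * ga * gp)"
  using ga gp by (simp add: field_simps)

lemma PP_sym:
  assumes asym: "\<And>i j k. c i j k = - c j i k"
    and ga: "g a \<noteq> 0" and gp: "g p \<noteq> 0"
  shows "PP c g k l a p + PP c g k l p a =
     (- (g k * g l * c p a k * c p a l) + (g p * c a k p - g a * c k p a) * (g p * c a l p - g a * c l p a)) / (2 * g a * g p)"
proof -
  have r: "c k a p = - c a k p" "c p k a = - c k p a" "c a p k = - c p a k"
     "c p l a = - c l p a" "c a p l = - c p a l" "c l a p = - c a l p"
    by (rule asym)+
  show ?thesis unfolding PP_def Gam_def r
    by (rule S_alg[OF ga gp])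
qed



lemma lie_supp: "is_lie_algebra n c \<Longrightarrow> c i j k \<noteq> 0 \<Longrightarrow> i < n \<and> j < n \<and> k < n"
  unfolding is_lie_algebra_def by blast

lemma lie_asym: "is_lie_algebra n c \<Longrightarrow> c i j k = - c j i k"
  unfolding is_lie_algebra_def by blast

lemma br_scaled:
  assumes x: "x < n" and a: "a < n" and u: "\<And>q. q \<noteq> p \<Longrightarrow> c x a q = 0"
  shows "br n c (basis_vec x) (\<lambda>i. s * basis_vec a i) = (\<lambda>i. s * c x a p * basis_vec p i)"
proof
  fix i
  have "br n c (basis_vec x) (\<lambda>i. s * basis_vec a i) i = (\<Sum>j<n. basis_vec a j * (s * c x j i))"
    unfolding br_basis_l[OF x] by (simp add: mult_ac)
  also have "\<dots> = s * c x a i" using sum_basis_l[OF a] by simp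
  also have "\<dots> = s * c x a p * basis_vec p i"
    using u[of i] by (cases "i = p") (auto simp: basis_vec_def)
  finally show "br n c (basis_vec x) (\<lambda>i. s * basis_vec a i) i = s * c x a p * basis_vec p i" .
qed

lemma Zlem:
  assumes lie: "is_lie_algebra n c" and nil: "is_nilpotent n c" and nice: "is_nice n c"
  shows "c x a p * c y p a = 0"
proof (rule ccontr)
  assume nz: "c x a p * c y p a \<noteq> 0"
  define \<mu> where "\<mu> = c x a p * c y p a"
  have c1: "c x a p \<noteq> 0" and c2: "c y p a \<noteq> 0" using nz by auto
  have xn: "x < n" and an: "a < n" and pn: "p < n" and yn: "y < n"
    using lie_supp[OF lie c1] lie_supp[OF lie c2] by auto
  have n1: "\<forall>i<n. \<forall>j<n. \<exists>k. \<forall>k'. c i j k' \<noteq> 0 \<longrightarrow> k' = k" using nice unfolding is_nice_def by blast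
  obtain q1 where q1: "\<And>k'. c x a k' \<noteq> 0 \<Longrightarrow> k' = q1" using n1 xn an by blast
  obtain q2 where q2: "\<And>k'. c y p k' \<noteq> 0 \<Longrightarrow> k' = q2" using n1 yn pn by blast
  have u1: "\<And>q. q \<noteq> p \<Longrightarrow> c x a q = 0" using q1 c1 q1[of p] by metis
  have u2: "\<And>q. q \<noteq> a \<Longrightarrow> c y p q = 0" using q2 c2 q2[of a] by metis
  define v where "v = (\<lambda>q::nat. if q = 0 then basis_vec a else if odd q then basis_vec x else basis_vec y)"
  have it: "iter_br n c v (2*m) = (\<lambda>i. \<mu>^m * basis_vec a i) \<and>
            iter_br n c v (2*m+1) = (\<lambda>i. \<mu>^m * c x a p * basis_vec p i)" for m
  proof (induction m)
    case 0
    have "iter_br n c v 1 = br n c (basis_vec x) (\<lambda>i. 1 * basis_vec a i)"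
      by (simp add: v_def)
    also have "\<dots> = (\<lambda>i. 1 * c x a p * basis_vec p i)" by (rule br_scaled) (auto simp: xn an u1)
    finally show ?case by (simp add: v_def)
  next
    case (Suc m)
    have s1: "2 * Suc m = Suc (2*m+1)" by simp
    have vv: "v (Suc (2*m+1)) = basis_vec y" by (simp add: v_def)
    have e2: "iter_br n c v (2 * Suc m) = br n c (basis_vec y) (\<lambda>i. (\<mu>^m * c x a p) * basis_vec p i)"
      unfolding s1 iter_br.simps vv using conjunct2[OF Suc.IH] by (simp add: mult.assoc)
    also have "\<dots> = (\<lambda>i. \<mu>^m * c x a p * c y p a * basis_vec a i)" by (rule br_scaled) (auto simp: yn pn u2)
    also have "\<dots> = (\<lambda>i. \<mu>^(Suc m) * basis_vec a i)" by (simp add: \<mu>_def mult_ac)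
    finally have A: "iter_br n c v (2 * Suc m) = (\<lambda>i. \<mu>^(Suc m) * basis_vec a i)" .
    have "iter_br n c v (2 * Suc m + 1) = br n c (basis_vec x) (iter_br n c v (2 * Suc m))"
      by (simp only: Suc_eq_plus1[symmetric] iter_br.simps) (simp add: v_def)
    also have "\<dots> = (\<lambda>i. \<mu>^(Suc m) * c x a p * basis_vec p i)" unfolding A by (rule br_scaled) (auto simp: xn an u1)
    finally show ?case using A by simp
  qed
  obtain P where P: "\<And>w. \<forall>k<n. iter_br n c w P k = 0" using nil unfolding is_nilpotent_def by blast
  have mu: "\<mu> \<noteq> 0" using nz \<mu>_def by simp
  show False
  proof (cases "even P")
    case True
    then obtain m where "P = 2*m" by blast
    then have "iter_br n c v P a = \<mu>^m" using it[of m] by (simp add: basis_vec_def)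
    then show False using P[of v] an mu by simp
  next
    case False
    then obtain m where "P = 2*m+1" using oddE by blast
    then have "iter_br n c v P = (\<lambda>i. \<mu>^m * c x a p * basis_vec p i)" using conjunct2[OF it[of m]] by simp
    then have "iter_br n c v P p = \<mu>^m * c x a p" by (simp add: basis_vec_def)
    then show False using P[of v] pn mu c1 by simp
  qed
qed

lemma diag0:
  assumes lie: "is_lie_algebra n c" and nil: "is_nilpotent n c" and nice: "is_nice n c"
  shows "c p a a = 0"
  using Zlem[OF lie nil nice, of p a a p] by simp



lemma nice1: "is_nice n c \<Longrightarrow> i < n \<Longrightarrow> j < n \<Longrightarrow> c i j k * c i j k' = 0 \<or> k = k'"
  unfolding is_nice_def by (metis mult_eq_0_iff)

lemma nice2: "is_nice n c \<Longrightarrow> i < n \<Longrightarrow> k < n \<Longrightarrow> c i j k * c i j' k = 0 \<or> j = j'"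
  unfolding is_nice_def by (metis mult_eq_0_iff)

lemma PP_pt:
  assumes lie: "is_lie_algebra n c" and nil: "is_nilpotent n c" and nice: "is_nice n c"
    and gnz: "\<forall>i<n. g i \<noteq> 0" and k: "k < n" and l: "l < n" and a: "a < n" and p: "p < n"
  shows "PP c g k l a p + PP c g k l p a = (if l = k then QQ c g k a p + QQ c g k p a else 0)"
proof -
  have asym: "\<And>i j k. c i j k = - c j i k" using lie_asym[OF lie] .
  have ga: "g a \<noteq> 0" and gp: "g p \<noteq> 0" and gk: "g k \<noteq> 0" using gnz a p k by auto
  have f1: "c a k p * c l p a = 0" using Zlem[OF lie nil nice, of k a p l] asym[of a k p] by simp
  note S = PP_sym[where c=c and k=k and l=l, OF asym ga gp]
  show ?thesis
  proof (cases "l = k")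
    case True
    have f1': "c a k p * c k p a = 0" using f1 True by simp
    have num: "- (g k * g k * c p a k * c p a k) + (g p * c a k p - g a * c k p a) * (g p * c a k p - g a * c k p a)
      = - ((g k)^2 * (c p a k)^2) + (g p)^2 * (c a k p)^2 - 2 * g a * g p * (c a k p * c k p a) + (g a)^2 * (c k p a)^2"
      by (simp add: algebra_simps power2_eq_square)
    have r: "c a p k = - c p a k" "c p k a = - c k p a" by (rule asym)+
    have e: "PP c g k l a p + PP c g k l p a = (- ((g k)^2 * (c p a k)^2) + (g p)^2 * (c a k p)^2 + (g a)^2 * (c k p a)^2) / (2 * g a * g p)"
      using S unfolding True num f1' by simp
    have q: "QQ c g k a p + QQ c g k p a = (- ((g k)^2 * (c p a k)^2) + (g p)^2 * (c a k p)^2 + (g a)^2 * (c k p a)^2) / (2 * g a * g p)"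
      unfolding QQ_def r using ga gp by (simp add: field_simps power2_eq_square)
    show ?thesis using e q True by simp
  next
    case False
    have f2: "c k p a * c a l p = 0" using Zlem[OF lie nil nice, of l a p k] asym[of a l p] by auto
    have f3: "c a k p * c a l p = 0" using nice2[OF nice a p, of k l] False by auto
    have f4: "c k p a * c l p a = 0" using nice2[OF nice p a, of k l] False asym[of k p a] asym[of l p a] by auto
    have f5: "c p a k * c p a l = 0" using nice1[OF nice p a, of k l] False by auto
    have num: "- (g k * g l * c p a k * c p a l) + (g p * c a k p - g a * c k p a) * (g p * c a l p - g a * c l p a)
      = - (g k * g l) * (c p a k * c p a l) + (g p)^2 * (c a k p * c a l p) - g p * g a * (c a k p * c l p a)
        - g a * g p * (c k p a * c a l p) + (g a)^2 * (c k p a * c l p a)"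
      by (simp add: algebra_simps power2_eq_square)
    show ?thesis using S False unfolding num f1 f2 f3 f4 f5 by simp
  qed
qed

lemma rr_formula:
  assumes lie: "is_lie_algebra n c" and nil: "is_nilpotent n c" and nice: "is_nice n c"
    and gnz: "\<forall>i<n. g i \<noteq> 0" and k: "k < n" and l: "l < n"
  shows "rr n c g l k = (if l = k then - (\<Sum>a<n. \<Sum>p<n. QQ c g k a p) else 0)"
proof -
  have sw1: "(\<Sum>a<n. \<Sum>p<n. PP c g k l p a) = (\<Sum>a<n. \<Sum>p<n. PP c g k l a p)"
    by (rule sum.swap)
  have sw2: "(\<Sum>a<n. \<Sum>p<n. QQ c g k p a) = (\<Sum>a<n. \<Sum>p<n. QQ c g k a p)"
    by (rule sum.swap)
  have "2 * (\<Sum>a<n. \<Sum>p<n. PP c g k l a p) = (\<Sum>a<n. \<Sum>p<n. PP c g k l a p + PP c g k l p a)"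
    using sw1 by (simp add: sum.distrib)
  also have "\<dots> = (\<Sum>a<n. \<Sum>p<n. if l = k then QQ c g k a p + QQ c g k p a else 0)"
    by (intro sum.cong refl) (simp add: PP_pt[OF lie nil nice gnz k l])
  also have "\<dots> = (if l = k then 2 * (\<Sum>a<n. \<Sum>p<n. QQ c g k a p) else 0)"
    using sw2 by (simp add: sum.distrib)
  finally have "(\<Sum>a<n. \<Sum>p<n. PP c g k l a p) = (if l = k then (\<Sum>a<n. \<Sum>p<n. QQ c g k a p) else 0)"
    by (cases "l = k") auto
  then show ?thesis unfolding rr_def PP_def[symmetric] by simp
qed



lemma half_sum:
  fixes G :: "nat \<Rightarrow> nat \<Rightarrow> real"
  assumes sym: "\<And>i j. G i j = G j i" and d: "\<And>i. G i i = 0"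
  shows "(\<Sum>i<n. \<Sum>j<n. if i < j then G i j else 0) = (\<Sum>i<n. \<Sum>j<n. G i j) / 2"
proof -
  have "(\<Sum>i<n. \<Sum>j<n. G i j) = (\<Sum>i<n. \<Sum>j<n. (if i < j then G i j else 0) + (if j < i then G i j else 0))"
    by (intro sum.cong refl) (auto simp: d)
  also have "\<dots> = (\<Sum>i<n. \<Sum>j<n. if i < j then G i j else 0) + (\<Sum>i<n. \<Sum>j<n. if j < i then G i j else 0)"
    by (simp add: sum.distrib)
  also have "(\<Sum>i<n. \<Sum>j<n. if j < i then G i j else 0) = (\<Sum>j<n. \<Sum>i<n. if j < i then G i j else 0)"
    by (rule sum.swap)
  also have "\<dots> = (\<Sum>i<n. \<Sum>j<n. if i < j then G i j else 0)"
    by (intro sum.cong refl) (simp add: sym)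
  finally show ?thesis by simp
qed

lemma roots_sum:
  fixes f :: "nat \<times> nat \<times> nat \<Rightarrow> real"
  assumes z: "\<And>i j k. c i j k = 0 \<Longrightarrow> f (i, j, k) = 0"
  shows "(\<Sum>h\<in>roots n c. f h) = (\<Sum>i<n. \<Sum>j<n. if i < j then (\<Sum>k<n. f (i, j, k)) else 0)"
proof -
  have "(\<Sum>h\<in>roots n c. f h) = (\<Sum>h\<in>{..<n} \<times> {..<n} \<times> {..<n}. if fst h < fst (snd h) then f h else 0)"
  proof (rule sum.mono_neutral_cong_left)
    show "finite ({..<n} \<times> {..<n} \<times> {..<n})" by simp
    show "roots n c \<subseteq> {..<n} \<times> {..<n} \<times> {..<n}" unfolding roots_def by auto
    show "\<forall>h\<in>{..<n} \<times> {..<n} \<times> {..<n} - roots n c. (if fst h < fst (snd h) then f h else 0) = 0"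
      unfolding roots_def using z by auto
    show "\<And>h. h \<in> roots n c \<Longrightarrow> f h = (if fst h < fst (snd h) then f h else 0)"
      unfolding roots_def by auto
  qed
  also have "\<dots> = (\<Sum>i<n. \<Sum>jk\<in>{..<n} \<times> {..<n}. if i < fst jk then f (i, jk) else 0)"
    unfolding sum.cartesian_product by (intro sum.cong refl) (auto split: prod.splits)
  also have "\<dots> = (\<Sum>i<n. \<Sum>j<n. \<Sum>k<n. if i < j then f (i, j, k) else 0)"
    unfolding sum.cartesian_product by (intro sum.cong refl) (auto split: prod.splits)
  also have "\<dots> = (\<Sum>i<n. \<Sum>j<n. if i < j then (\<Sum>k<n. f (i, j, k)) else 0)"
    by (intro sum.cong refl) simp
  finally show ?thesis .
qed



definition TT :: "sconst \<Rightarrow> vec \<Rightarrow> nat \<Rightarrow> nat \<Rightarrow> nat \<Rightarrow> real" where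
  "TT c g i j k = g k / (g i * g j) * (c i j k)^2"

lemma rho_eq:
  assumes lie: "is_lie_algebra n c" and gnz: "\<forall>i<n. g i \<noteq> 0" and k: "k < n"
  shows "- (\<Sum>a<n. \<Sum>p<n. QQ c g k a p) / g k
     = (\<Sum>h\<in>roots n c. root_matrix h k * (\<lambda>(i,j,k). g k / (g i * g j) * (c i j k)\<^sup>2) h) / 2"
proof -
  have asym: "\<And>i j k. c i j k = - c j i k" using lie_asym[OF lie] .
  have Tsym: "TT c g i j k' = TT c g j i k'" for i j k'
    unfolding TT_def using asym[of i j k'] by (simp add: mult.commute)
  have Tdiag: "TT c g i i k' = 0" for i k'
    unfolding TT_def using asym[of i i k'] by simp
  define G where "G i j = (\<Sum>k'<n. root_matrix (i, j, k') k * TT c g i j k')" for i j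
  have RS: "(\<Sum>h\<in>roots n c. root_matrix h k * (\<lambda>(i,j,k). g k / (g i * g j) * (c i j k)\<^sup>2) h)
      = (\<Sum>i<n. \<Sum>j<n. if i < j then G i j else 0)"
    unfolding G_def TT_def
    by (subst roots_sum[where f="\<lambda>h. root_matrix h k * (\<lambda>(i,j,k). g k / (g i * g j) * (c i j k)\<^sup>2) h"]) (simp_all cong: if_cong)
  have Gsym: "G i j = G j i" for i j
    unfolding G_def root_matrix_def using Tsym by (intro sum.cong refl) auto
  have Gd: "G i i = 0" for i
    unfolding G_def using Tdiag by simp
  have Gexp: "G i j = TT c g i j k - (if i = k then (\<Sum>k'<n. TT c g i j k') else 0)
      - (if j = k then (\<Sum>k'<n. TT c g i j k') else 0)" for i j
  proof -
    have "G i j = (\<Sum>k'<n. (if k = k' then TT c g i j k' else 0) - (if k = i then TT c g i j k' else 0)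
       - (if k = j then TT c g i j k' else 0))"
      unfolding G_def root_matrix_def by (intro sum.cong refl) (simp add: algebra_simps)
    also have "\<dots> = TT c g i j k - (if i = k then (\<Sum>k'<n. TT c g i j k') else 0)
      - (if j = k then (\<Sum>k'<n. TT c g i j k') else 0)"
      using k by (simp add: sum_subtractf)
    finally show ?thesis .
  qed
  have SG: "(\<Sum>i<n. \<Sum>j<n. G i j) = (\<Sum>i<n. \<Sum>j<n. TT c g i j k) - 2 * (\<Sum>j<n. \<Sum>k'<n. TT c g k j k')"
  proof -
    have "(\<Sum>i<n. \<Sum>j<n. G i j) = (\<Sum>i<n. \<Sum>j<n. TT c g i j k)
        - (\<Sum>i<n. \<Sum>j<n. if i = k then (\<Sum>k'<n. TT c g i j k') else 0)
        - (\<Sum>i<n. \<Sum>j<n. if j = k then (\<Sum>k'<n. TT c g i j k') else 0)"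
      unfolding Gexp by (simp add: sum_subtractf)
    also have "(\<Sum>i<n. \<Sum>j<n. if i = k then (\<Sum>k'<n. TT c g i j k') else 0) = (\<Sum>j<n. \<Sum>k'<n. TT c g k j k')"
    proof -
      have "(\<Sum>i<n. \<Sum>j<n. if i = k then (\<Sum>k'<n. TT c g i j k') else 0)
          = (\<Sum>i<n. if i = k then (\<Sum>j<n. \<Sum>k'<n. TT c g i j k') else 0)"
        by (intro sum.cong refl) simp
      then show ?thesis using k by simp
    qed
    also have "(\<Sum>i<n. \<Sum>j<n. if j = k then (\<Sum>k'<n. TT c g i j k') else 0) = (\<Sum>j<n. \<Sum>k'<n. TT c g k j k')"
    proof -
      have "(\<Sum>i<n. \<Sum>j<n. if j = k then (\<Sum>k'<n. TT c g i j k') else 0)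
          = (\<Sum>i<n. \<Sum>k'<n. TT c g i k k')"
        using k by (simp add: if_distrib cong: if_cong)
      also have "\<dots> = (\<Sum>i<n. \<Sum>k'<n. TT c g k i k')"
        using Tsym by simp
      finally show ?thesis .
    qed
    finally show ?thesis by simp
  qed
  have Q: "- (QQ c g k a p / g k) = TT c g a p k / 4 - TT c g k a p / 2" if a: "a < n" and p: "p < n" for a p
  proof -
    have ga: "g a \<noteq> 0" and gp: "g p \<noteq> 0" and gk: "g k \<noteq> 0" using gnz a p k by auto
    have "(c k a p)^2 = (c a k p)^2" using asym[of k a p] by simp
    then show ?thesis unfolding QQ_def TT_def using ga gp gk
      by (simp add: field_simps power2_eq_square)
  qed
  have "- (\<Sum>a<n. \<Sum>p<n. QQ c g k a p) / g k = (\<Sum>a<n. \<Sum>p<n. - (QQ c g k a p / g k))"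
    by (simp add: sum_divide_distrib sum_negf)
  also have "\<dots> = (\<Sum>a<n. \<Sum>p<n. TT c g a p k / 4 - TT c g k a p / 2)"
    by (intro sum.cong refl) (simp add: Q)
  also have "\<dots> = (\<Sum>a<n. \<Sum>p<n. TT c g a p k) / 4 - (\<Sum>a<n. \<Sum>p<n. TT c g k a p) / 2"
    by (simp add: sum_subtractf sum_divide_distrib)
  also have "\<dots> = (\<Sum>i<n. \<Sum>j<n. G i j) / 4"
    unfolding SG by simp
  also have "\<dots> = (\<Sum>i<n. \<Sum>j<n. if i < j then G i j else 0) / 2"
    using half_sum[of G n, OF Gsym Gd] by simp
  finally show ?thesis unfolding RS .
qed



lemma Ric_formula:
  assumes lie: "is_lie_algebra n c" and nil: "is_nilpotent n c" and nice: "is_nice n c"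
    and gnz: "\<forall>i<n. g i \<noteq> 0" and k: "k < n"
  shows "Ric n c g y k = (\<Sum>h\<in>roots n c. root_matrix h k * (\<lambda>(i,j,k). g k / (g i * g j) * (c i j k)\<^sup>2) h) / 2 * y k"
proof -
  have asym: "\<And>i j k. c i j k = - c j i k" using lie_asym[OF lie] .
  have d0: "\<And>p a. c p a a = 0" using diag0[OF lie nil nice] .
  have "ric n c g y (basis_vec k) = (\<Sum>l<n. y l * rr n c g l k)" by (rule ric_eq[OF d0 asym k])
  also have "\<dots> = (\<Sum>l<n. if l = k then y l * - (\<Sum>a<n. \<Sum>p<n. QQ c g k a p) else 0)"
    by (intro sum.cong refl) (simp add: rr_formula[OF lie nil nice gnz k])
  also have "\<dots> = y k * - (\<Sum>a<n. \<Sum>p<n. QQ c g k a p)" using k by simp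
  finally have "Ric n c g y k = y k * (- (\<Sum>a<n. \<Sum>p<n. QQ c g k a p) / g k)"
    unfolding Ric_def using k by simp
  then show ?thesis unfolding rho_eq[OF lie gnz k] by simp
qed

lemma M_apply:
  assumes h: "(i, j, k) \<in> roots n c"
  shows "(\<Sum>l<n. root_matrix (i, j, k) l * w l) = w k - w i - w j"
proof -
  have i: "i < n" and j: "j < n" and k: "k < n" and ij: "i \<noteq> j" using h unfolding roots_def by auto
  have "(\<Sum>l<n. root_matrix (i, j, k) l * w l) =
      (\<Sum>l<n. (if l = k then w l else 0)) - (\<Sum>l<n. (if l = i then w l else 0)) - (\<Sum>l<n. (if l = j then w l else 0))"
    unfolding root_matrix_def sum_subtractf[symmetric] by (intro sum.cong refl) (simp add: algebra_simps)
  then show ?thesis using i j k by simp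
qed



theorem theorem1p5:
  fixes n :: nat and c :: sconst and g :: vec and lam :: real
    and b :: "nat \<times> nat \<times> nat \<Rightarrow> real"
  assumes lie: "is_lie_algebra n c"
    and nil: "is_nilpotent n c"
    and nice: "is_nice n c"
    and bsol: "MMt_eq_one n c b"
    and gnz: "\<forall>i<n. g i \<noteq> 0"
  defines "X \<equiv> (\<lambda>(i,j,k). g k / (g i * g j) * (c i j k)\<^sup>2)"
  shows "((\<exists>D. is_derivation n c D \<and>
             (\<forall>y. \<forall>k<n. Ric n c g y k = lam * y k + matvec n D y k))
          \<longleftrightarrow> (\<forall>y. \<forall>k<n. Ric n c g y k = lam * (y k - nik_diag n c b k * y k)))
       \<and> ((\<forall>y. \<forall>k<n. Ric n c g y k = lam * (y k - nik_diag n c b k * y k))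
          \<longleftrightarrow> (\<exists>z. in_ker_Mt n c z \<and>
                 (\<forall>h\<in>roots n c. X h = - 2 * lam * b h + z h)))"
proof -
  have asym: "\<And>i j k. c i j k = - c j i k" using lie_asym[OF lie] .
  define \<rho> where "\<rho> k = (\<Sum>h\<in>roots n c. root_matrix h k * X h) / 2" for k
  define u where "u l = (\<Sum>h\<in>roots n c. root_matrix h l * b h)" for l
  have R: "Ric n c g y k = \<rho> k * y k" if "k < n" for y k
    unfolding \<rho>_def X_def by (rule Ric_formula[OF lie nil nice gnz that])
  have nik: "nik_diag n c b k = u k + 1" for k unfolding nik_diag_def u_def by simp
  have fin: "finite (roots n c)"
  proof (rule finite_subset)
    show "roots n c \<subseteq> {..<n} \<times> {..<n} \<times> {..<n}" unfolding roots_def by auto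
  qed simp
  have Mu: "(\<Sum>l<n. root_matrix h l * u l) = 1" if h: "h \<in> roots n c" for h
  proof -
    have "(\<Sum>l<n. root_matrix h l * u l) = (\<Sum>l<n. \<Sum>h'\<in>roots n c. root_matrix h l * root_matrix h' l * b h')"
      unfolding u_def by (simp add: sum_distrib_left mult.assoc)
    also have "\<dots> = (\<Sum>h'\<in>roots n c. \<Sum>l<n. root_matrix h l * root_matrix h' l * b h')"
      by (rule sum.swap)
    also have "\<dots> = (\<Sum>h'\<in>roots n c. (\<Sum>l<n. root_matrix h l * root_matrix h' l) * b h')"
      by (simp add: sum_distrib_right)
    also have "\<dots> = 1" using bsol h unfolding MMt_eq_one_def by blast
    finally show ?thesis .
  qed
  have uadd: "u k - u i - u j = 1" if h: "(i, j, k) \<in> roots n c" for i j k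
    using Mu[OF h] M_apply[OF h, of u] by simp
  have vadd: "u k - u i - u j = 1" if "i < n" "j < n" "k < n" "c i j k \<noteq> 0" for i j k
  proof (cases "i < j")
    case True
    then show ?thesis using that by (intro uadd) (simp add: roots_def)
  next
    case False
    have "i \<noteq> j" using that asym[of i i k] by auto
    then have "j < i" using False by simp
    moreover have "c j i k \<noteq> 0" using that asym[of j i k] by simp
    ultimately have "u k - u j - u i = 1" using that by (intro uadd) (simp add: roots_def)
    then show ?thesis by simp
  qed
  define P2 where "P2 \<longleftrightarrow> (\<forall>k<n. \<rho> k = - lam * u k)"
  have S2: "(\<forall>y. \<forall>k<n. Ric n c g y k = lam * (y k - nik_diag n c b k * y k)) \<longleftrightarrow> P2"
  proof
    assume H: "\<forall>y. \<forall>k<n. Ric n c g y k = lam * (y k - nik_diag n c b k * y k)"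
    show P2 unfolding P2_def
    proof (intro allI impI)
      fix k assume k: "k < n"
      have "\<rho> k * 1 = lam * (1 - (u k + 1) * 1)" using H[rule_format, of k "\<lambda>_. 1"] R[OF k, of "\<lambda>_. 1"] k nik
        by simp
      then show "\<rho> k = - lam * u k" by (simp add: algebra_simps)
    qed
  next
    assume P: P2
    show "\<forall>y. \<forall>k<n. Ric n c g y k = lam * (y k - nik_diag n c b k * y k)"
      using P unfolding P2_def by (simp add: R nik algebra_simps)
  qed
  have S3: "(\<exists>z. in_ker_Mt n c z \<and> (\<forall>h\<in>roots n c. X h = - 2 * lam * b h + z h)) \<longleftrightarrow> P2"
  proof
    assume "\<exists>z. in_ker_Mt n c z \<and> (\<forall>h\<in>roots n c. X h = - 2 * lam * b h + z h)"
    then obtain z where zk: "in_ker_Mt n c z" and zX: "\<forall>h\<in>roots n c. X h = - 2 * lam * b h + z h" by blast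
    show P2 unfolding P2_def
    proof (intro allI impI)
      fix k assume k: "k < n"
      have "2 * \<rho> k = (\<Sum>h\<in>roots n c. root_matrix h k * X h)"
        unfolding \<rho>_def by simp
      also have "\<dots> = (\<Sum>h\<in>roots n c. root_matrix h k * (- 2 * lam * b h + z h))"
        using zX by (intro sum.cong refl) simp
      also have "\<dots> = (\<Sum>h\<in>roots n c. (- 2 * lam) * (root_matrix h k * b h) + root_matrix h k * z h)"
        by (intro sum.cong refl) (simp add: algebra_simps)
      also have "\<dots> = - 2 * lam * u k + (\<Sum>h\<in>roots n c. root_matrix h k * z h)"
        unfolding u_def sum.distrib sum_distrib_left[symmetric] ..
      also have "\<dots> = - 2 * lam * u k" using zk k unfolding in_ker_Mt_def by simp
      finally show "\<rho> k = - lam * u k" by simp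
    qed
  next
    assume P: P2
    show "\<exists>z. in_ker_Mt n c z \<and> (\<forall>h\<in>roots n c. X h = - 2 * lam * b h + z h)"
    proof (intro exI conjI)
      show "\<forall>h\<in>roots n c. X h = - 2 * lam * b h + (X h + 2 * lam * b h)" by simp
      show "in_ker_Mt n c (\<lambda>h. X h + 2 * lam * b h)" unfolding in_ker_Mt_def
      proof (intro allI impI)
        fix l assume l: "l < n"
        have "(\<Sum>h\<in>roots n c. root_matrix h l * (X h + 2 * lam * b h)) = 2 * \<rho> l + 2 * lam * u l"
          unfolding \<rho>_def u_def by (simp add: distrib_left sum.distrib sum_distrib_left mult_ac)
        then show "(\<Sum>h\<in>roots n c. root_matrix h l * (X h + 2 * lam * b h)) = 0"
          using P l unfolding P2_def by simp
      qed
    qed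
  qed
  have S1: "(\<exists>D. is_derivation n c D \<and> (\<forall>y. \<forall>k<n. Ric n c g y k = lam * y k + matvec n D y k)) \<longleftrightarrow> P2"
  proof
    assume "\<exists>D. is_derivation n c D \<and> (\<forall>y. \<forall>k<n. Ric n c g y k = lam * y k + matvec n D y k)"
    then obtain D where dD: "is_derivation n c D" and RD: "\<And>y k. k < n \<Longrightarrow> Ric n c g y k = lam * y k + matvec n D y k"
      by blast
    have Dkl: "D k l = (if k = l then \<rho> k - lam else 0)" if k: "k < n" and l: "l < n" for k l
    proof -
      have "matvec n D (basis_vec l) k = D k l"
        unfolding matvec_def by (rule sum_basis_r[OF l])
      moreover have "\<rho> k * basis_vec l k = lam * basis_vec l k + matvec n D (basis_vec l) k"
        using RD[OF k, of "basis_vec l"] R[OF k, of "basis_vec l"] by simp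
      ultimately show ?thesis by (auto simp: basis_vec_def)
    qed
    have mvb: "matvec n D (basis_vec i) = (\<lambda>m. D m i)" if i: "i < n" for i
      unfolding matvec_def using sum_basis_r[OF i] by simp
    have rad: "\<rho> k - \<rho> i - \<rho> j = - lam" if h: "(i, j, k) \<in> roots n c" for i j k
    proof -
      have i: "i < n" and j: "j < n" and k: "k < n" and cz: "c i j k \<noteq> 0" using h unfolding roots_def by auto
      have der: "matvec n D (br n c (basis_vec i) (basis_vec j)) k =
          br n c (matvec n D (basis_vec i)) (basis_vec j) k + br n c (basis_vec i) (matvec n D (basis_vec j)) k"
        using dD k unfolding is_derivation_def by blast
      have bij: "br n c (basis_vec i) (basis_vec j) = (\<lambda>m. c i j m)"
        unfolding br_basis_l[OF i] using sum_basis_l[OF j] by simp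
      have t1: "matvec n D (\<lambda>m. c i j m) k = (\<rho> k - lam) * c i j k"
      proof -
        have "matvec n D (\<lambda>m. c i j m) k = (\<Sum>l<n. (if l = k then (\<rho> k - lam) * c i j l else 0))"
          unfolding matvec_def using k by (intro sum.cong refl) (auto simp: Dkl)
        then show ?thesis using k by simp
      qed
      have t2: "br n c (matvec n D (basis_vec i)) (basis_vec j) k = (\<rho> i - lam) * c i j k"
      proof -
        have "br n c (matvec n D (basis_vec i)) (basis_vec j) k = (\<Sum>m<n. D m i * c m j k)"
          unfolding br_basis_r[OF j] mvb[OF i] ..
        also have "\<dots> = (\<Sum>m<n. if m = i then (\<rho> i - lam) * c m j k else 0)"
          using i by (intro sum.cong refl) (auto simp: Dkl)
        finally show ?thesis using i by simp
      qed
      have t3: "br n c (basis_vec i) (matvec n D (basis_vec j)) k = (\<rho> j - lam) * c i j k"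
      proof -
        have "br n c (basis_vec i) (matvec n D (basis_vec j)) k = (\<Sum>m<n. D m j * c i m k)"
          unfolding br_basis_l[OF i] mvb[OF j] ..
        also have "\<dots> = (\<Sum>m<n. if m = j then (\<rho> j - lam) * c i m k else 0)"
          using j by (intro sum.cong refl) (auto simp: Dkl)
        finally show ?thesis using j by simp
      qed
      have "(\<rho> k - lam) * c i j k = ((\<rho> i - lam) + (\<rho> j - lam)) * c i j k"
        using der unfolding bij t1 t2 t3 by (simp add: algebra_simps)
      then have "\<rho> k - lam = (\<rho> i - lam) + (\<rho> j - lam)" using cz by simp
      then show ?thesis by simp
    qed
    define w where "w l = \<rho> l + lam * u l" for l
    define s where "s h = X h / 2 + lam * b h" for h
    have ws: "w l = (\<Sum>h\<in>roots n c. root_matrix h l * s h)" for l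
      unfolding w_def \<rho>_def u_def s_def
      by (simp add: sum_divide_distrib sum_distrib_left distrib_left sum.distrib mult_ac)
    have Mw: "(\<Sum>l<n. root_matrix h l * w l) = 0" if h: "h \<in> roots n c" for h
    proof -
      obtain i j k where hh: "h = (i, j, k)" by (cases h) auto
      have "(\<Sum>l<n. root_matrix h l * w l) = w k - w i - w j" using M_apply h hh by simp
      also have "\<dots> = (\<rho> k - \<rho> i - \<rho> j) + lam * (u k - u i - u j)" unfolding w_def by (simp add: algebra_simps)
      also have "\<dots> = 0" using rad uadd h hh by simp
      finally show ?thesis .
    qed
    have "(\<Sum>l<n. w l * w l) = (\<Sum>l<n. \<Sum>h\<in>roots n c. w l * (root_matrix h l * s h))"
      unfolding ws[of l for l] by (simp add: sum_distrib_left)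
    also have "\<dots> = (\<Sum>h\<in>roots n c. \<Sum>l<n. w l * (root_matrix h l * s h))"
      by (rule sum.swap)
    also have "\<dots> = (\<Sum>h\<in>roots n c. s h * (\<Sum>l<n. root_matrix h l * w l))"
      by (simp add: sum_distrib_left mult_ac)
    also have "\<dots> = 0" by (simp add: Mw)
    finally have sq: "(\<Sum>l<n. w l * w l) = 0" .
    have w0: "w l = 0" if l: "l < n" for l
    proof -
      have "\<forall>l\<in>{..<n}. w l * w l = 0"
        using sq by (subst sum_nonneg_eq_0_iff[symmetric]) auto
      then show ?thesis using l by simp
    qed
    show P2 unfolding P2_def
    proof (intro allI impI)
      fix k assume "k < n"
      then show "\<rho> k = - lam * u k" using w0[of k] unfolding w_def by simp
    qed
  next
    assume P: P2
    define D where "D k l = (if k = l then - lam * (u k + 1) else 0)" for k l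
    have mv: "matvec n D w k = - lam * (u k + 1) * w k" if k: "k < n" for w k
    proof -
      have "matvec n D w k = (\<Sum>l<n. if l = k then - lam * (u k + 1) * w l else 0)"
        unfolding matvec_def D_def by (intro sum.cong refl) auto
      then show ?thesis using k by simp
    qed
    show "\<exists>D. is_derivation n c D \<and> (\<forall>y. \<forall>k<n. Ric n c g y k = lam * y k + matvec n D y k)"
    proof (intro exI conjI allI impI)
      fix y k assume k: "k < n"
      show "Ric n c g y k = lam * y k + matvec n D y k"
        using P k unfolding P2_def by (simp add: R mv algebra_simps)
    next
      show "is_derivation n c D" unfolding is_derivation_def
      proof (intro allI impI)
        fix x y k assume k: "k < n"
        have pt: "- lam * (u k + 1) * (x i * y j * c i j k) =
            - lam * (u i + 1) * x i * y j * c i j k + x i * (- lam * (u j + 1) * y j) * c i j k"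
          if i: "i < n" and j: "j < n" for i j
        proof (cases "c i j k = 0")
          case True then show ?thesis by simp
        next
          case False
          then have "u k - u i - u j = 1" using vadd i j k by blast
          then have "u k + 1 = (u i + 1) + (u j + 1)" by simp
          then show ?thesis by (simp add: algebra_simps)
        qed
        have "matvec n D (br n c x y) k = - lam * (u k + 1) * (\<Sum>i<n. \<Sum>j<n. x i * y j * c i j k)"
          using mv[OF k] unfolding br_def by simp
        also have "\<dots> = (\<Sum>i<n. \<Sum>j<n. - lam * (u k + 1) * (x i * y j * c i j k))"
          by (simp add: sum_distrib_left)
        also have "\<dots> = (\<Sum>i<n. \<Sum>j<n. - lam * (u i + 1) * x i * y j * c i j k + x i * (- lam * (u j + 1) * y j) * c i j k)"
          by (intro sum.cong refl) (rule pt; simp)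
        also have "\<dots> = (\<Sum>i<n. \<Sum>j<n. - lam * (u i + 1) * x i * y j * c i j k) + (\<Sum>i<n. \<Sum>j<n. x i * (- lam * (u j + 1) * y j) * c i j k)"
          by (simp only: sum.distrib)
        also have "\<dots> = (\<Sum>i<n. \<Sum>j<n. matvec n D x i * y j * c i j k) + (\<Sum>i<n. \<Sum>j<n. x i * matvec n D y j * c i j k)"
          by (intro arg_cong2[where f="(+)"] sum.cong refl) (simp_all add: mv)
        also have "\<dots> = br n c (matvec n D x) y k + br n c x (matvec n D y) k"
          unfolding br_def ..
        finally show "matvec n D (br n c x y) k = br n c (matvec n D x) y k + br n c x (matvec n D y) k" .
      qed
    qed
  qed
  show ?thesis using S1 S2 S3 by blast
qed

end
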